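(* Let $G=(V,E)$ be an undirected graph (finite or infinite) with $|V|>2$. If $G$ is decomposable and has a color class $\widehat A$ with $\widetilde A=V$, then $G$ has a non-trivial maximal ``strong'' partitive set, i.e. a ``strong'' partitive set $X$ with $|X|\ge2$ and $X\neq V$ which is maximal for inclusion among the ``strong'' partitive sets of $G$ different from $V$.
   Context: A graph $G=(V,E)$ has vertex set $V$ and edge set $E\subseteq V^2$; it is undirected if $E$ is irreflexive and symmetric. A set $X\subseteq V$ is a partitive set of $G$ if for all $a,b\in X$ and $c\in V\setminus X$: $(a,c)\in E\Leftrightarrow(b,c)\in E$ and $(c,a)\in E\Leftrightarrow(c,b)\in E$; $I(G)$ is the class of partitive sets; a partitive set is trivial if it is a singleton or $V$. $G$ is indecomposable if all its partitive sets are trivial, decomposable otherwise. A ``strong'' partitive set is an $X\in I(G)$ such that for every $Y\in I(G)$ with $X\cap Y\neq\emptyset$, $X\subseteq Y$ or $Y\subseteq X$. Implication classes: on $E$ define $(a,b)\Gamma(a',b')$ iff either $a=a'$ and $(b,b')\notin E$, or $b=b'$ and $(a,a')\notin E$; the classes of the transitive closure $\Gamma^*$ are the implication classes. For an implication class $A$, $A^{-1}=\{(b,a):(a,b)\in A\}$ and the color class is $\widehat A=A\cup A^{-1}$; $\widetilde A$ is the set of vertices spanned by $\widehat A$. *)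

theory Defs
  imports Main
begin

definition graph :: "'a set \<Rightarrow> ('a \<times> 'a) set \<Rightarrow> bool" where
  "graph V E \<longleftrightarrow> E \<subseteq> V \<times> V"

definition undirected :: "'a set \<Rightarrow> ('a \<times> 'a) set \<Rightarrow> bool" where
  "undirected V E \<longleftrightarrow> graph V E \<and> irrefl E \<and> sym E"

definition partitive :: "'a set \<Rightarrow> ('a \<times> 'a) set \<Rightarrow> 'a set \<Rightarrow> bool" where
  "partitive V E X \<longleftrightarrow> X \<subseteq> V \<and>
     (\<forall>a\<in>X. \<forall>b\<in>X. \<forall>c\<in>V - X.
        ((a, c) \<in> E \<longleftrightarrow> (b, c) \<in> E) \<and> ((c, a) \<in> E \<longleftrightarrow> (c, b) \<in> E))"

definition trivial_set :: "'a set \<Rightarrow> 'a set \<Rightarrow> bool" where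
  "trivial_set V X \<longleftrightarrow> X = {} \<or> (\<exists>x. X = {x}) \<or> X = V"

definition indecomposable :: "'a set \<Rightarrow> ('a \<times> 'a) set \<Rightarrow> bool" where
  "indecomposable V E \<longleftrightarrow> (\<forall>X. partitive V E X \<longrightarrow> trivial_set V X)"

definition decomposable :: "'a set \<Rightarrow> ('a \<times> 'a) set \<Rightarrow> bool" where
  "decomposable V E \<longleftrightarrow> \<not> indecomposable V E"

definition strong_partitive :: "'a set \<Rightarrow> ('a \<times> 'a) set \<Rightarrow> 'a set \<Rightarrow> bool" where
  "strong_partitive V E X \<longleftrightarrow> partitive V E X \<and>
     (\<forall>Y. partitive V E Y \<and> X \<inter> Y \<noteq> {} \<longrightarrow> X \<subseteq> Y \<or> Y \<subseteq> X)"

definition Gamma :: "('a \<times> 'a) set \<Rightarrow> (('a \<times> 'a) \<times> ('a \<times> 'a)) set" where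
  "Gamma E = {((a, b), (a', b')). (a, b) \<in> E \<and> (a', b') \<in> E \<and>
      ((a = a' \<and> (b, b') \<notin> E) \<or> (b = b' \<and> (a, a') \<notin> E))}"

definition implication_class :: "('a \<times> 'a) set \<Rightarrow> ('a \<times> 'a) set \<Rightarrow> bool" where
  "implication_class E A \<longleftrightarrow> (\<exists>e\<in>E. A = {e' \<in> E. (e, e') \<in> (Gamma E)\<^sup>*})"

definition color_class :: "('a \<times> 'a) set \<Rightarrow> ('a \<times> 'a) set" where
  "color_class A = A \<union> A\<inverse>"

definition spanned :: "('a \<times> 'a) set \<Rightarrow> 'a set" where
  "spanned A = Domain (color_class A) \<union> Range (color_class A)"

end

theory Submission
  imports Defs
begin

lemma gamma_closed:
  assumes und: "undirected V E" and X: "partitive V E X"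
    and r: "(p, q) \<in> (Gamma E)\<^sup>*" and p: "fst p \<in> X" "snd p \<in> X"
  shows "fst q \<in> X \<and> snd q \<in> X"
  using r p
proof (induction q rule: rtrancl_induct)
  case base
  then show ?case by simp
next
  case (step y z)
  obtain a b where y: "y = (a, b)" by (cases y)
  obtain a' b' where z: "z = (a', b')" by (cases z)
  have ab: "a \<in> X" "b \<in> X" using step y by auto
  have g: "(a, b) \<in> E" "(a', b') \<in> E"
    "(a = a' \<and> (b, b') \<notin> E) \<or> (b = b' \<and> (a, a') \<notin> E)"
    using step(2) y z unfolding Gamma_def by auto
  have EV: "E \<subseteq> V \<times> V" and sy: "sym E"
    using und unfolding undirected_def graph_def by auto
  from g(3) show ?case
  proof
    assume h: "a = a' \<and> (b, b') \<notin> E"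
    have "b' \<in> X"
    proof (rule ccontr)
      assume "b' \<notin> X"
      moreover have "b' \<in> V" using g(2) EV by auto
      ultimately have "(a, b') \<in> E \<longleftrightarrow> (b, b') \<in> E"
        using X ab unfolding partitive_def by blast
      then show False using h g(2) by auto
    qed
    then show ?thesis using z h ab by auto
  next
    assume h: "b = b' \<and> (a, a') \<notin> E"
    have "a' \<in> X"
    proof (rule ccontr)
      assume "a' \<notin> X"
      moreover have "a' \<in> V" using g(2) EV by auto
      ultimately have "(a', a) \<in> E \<longleftrightarrow> (a', b) \<in> E"
        using X ab unfolding partitive_def by blast
      moreover have "(a', a) \<notin> E" using h sy unfolding sym_def by blast
      ultimately show False using h g(2) by auto
    qed
    then show ?thesis using z h ab by auto
  qed
qed

lemma gamma_sym:
  assumes und: "undirected V E"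
  shows "sym (Gamma E)"
proof -
  have sy: "sym E" using und unfolding undirected_def by auto
  show ?thesis unfolding sym_def Gamma_def using sy unfolding sym_def by auto
qed

lemma class_inside:
  assumes und: "undirected V E" and X: "partitive V E X"
    and A: "implication_class E A" and sp: "spanned A = V"
    and ab: "(a, b) \<in> A" "a \<in> X" "b \<in> X"
  shows "X = V"
proof -
  obtain e where e: "e \<in> E" and Adef: "A = {e' \<in> E. (e, e') \<in> (Gamma E)\<^sup>*}"
    using A unfolding implication_class_def by auto
  have r1: "(e, (a, b)) \<in> (Gamma E)\<^sup>*" using ab Adef by auto
  have "sym ((Gamma E)\<^sup>*)" using gamma_sym[OF und] by (simp add: sym_rtrancl)
  then have r2: "((a, b), e) \<in> (Gamma E)\<^sup>*" using r1 unfolding sym_def by blast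
  have all: "c \<in> X \<and> d \<in> X" if "(c, d) \<in> A" for c d
  proof -
    have "(e, (c, d)) \<in> (Gamma E)\<^sup>*" using that Adef by auto
    then have "((a, b), (c, d)) \<in> (Gamma E)\<^sup>*" using r2 by auto
    then show ?thesis using gamma_closed[OF und X, of "(a,b)" "(c,d)"] ab by auto
  qed
  have "V \<subseteq> X" using sp all unfolding spanned_def color_class_def by auto
  moreover have "X \<subseteq> V" using X unfolding partitive_def by auto
  ultimately show ?thesis by auto
qed

lemma union_partitive:
  assumes F: "\<And>W. W \<in> F \<Longrightarrow> partitive V E W" and p: "\<And>W. W \<in> F \<Longrightarrow> p \<in> W"
  shows "partitive V E (\<Union>F)"
  unfolding partitive_def
proof (intro conjI ballI)
  show "\<Union>F \<subseteq> V" using F unfolding partitive_def by auto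
next
  fix a b c assume a: "a \<in> \<Union>F" and b: "b \<in> \<Union>F" and c: "c \<in> V - \<Union>F"
  obtain W1 where W1: "W1 \<in> F" "a \<in> W1" using a by auto
  obtain W2 where W2: "W2 \<in> F" "b \<in> W2" using b by auto
  have c1: "c \<in> V - W1" "c \<in> V - W2" using c W1 W2 by auto
  have "((a, c) \<in> E \<longleftrightarrow> (p, c) \<in> E) \<and> ((c, a) \<in> E \<longleftrightarrow> (c, p) \<in> E)"
    using F[OF W1(1)] W1 p[OF W1(1)] c1 unfolding partitive_def by blast
  moreover have "((b, c) \<in> E \<longleftrightarrow> (p, c) \<in> E) \<and> ((c, b) \<in> E \<longleftrightarrow> (c, p) \<in> E)"
    using F[OF W2(1)] W2 p[OF W2(1)] c1 unfolding partitive_def by blast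
  ultimately show "(a, c) \<in> E \<longleftrightarrow> (b, c) \<in> E" "(c, a) \<in> E \<longleftrightarrow> (c, b) \<in> E" by blast+
qed

lemma union2_partitive:
  assumes "partitive V E X" "partitive V E Y" "p \<in> X" "p \<in> Y"
  shows "partitive V E (X \<union> Y)"
proof -
  have "partitive V E (\<Union>{X, Y})"
    by (rule union_partitive[where p = p]) (use assms in auto)
  then show ?thesis by simp
qed

lemma union_not_V:
  assumes und: "undirected V E" and A: "implication_class E A" and sp: "spanned A = V"
    and X: "partitive V E X" "X \<noteq> V" and Y: "partitive V E Y" "Y \<noteq> V"
    and p: "p \<in> X" "p \<in> Y"
  shows "X \<union> Y \<noteq> V"
proof
  assume U: "X \<union> Y = V"
  have pV: "p \<in> V" using p X unfolding partitive_def by auto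
  then have "p \<in> spanned A" using sp by simp
  then obtain q where q: "(p, q) \<in> A \<or> (q, p) \<in> A"
    unfolding spanned_def color_class_def by auto
  obtain e where Adef: "A = {e' \<in> E. (e, e') \<in> (Gamma E)\<^sup>*}"
    using A unfolding implication_class_def by auto
  have EV: "E \<subseteq> V \<times> V" using und unfolding undirected_def graph_def by auto
  have "q \<in> V" using q Adef EV by auto
  then have "q \<in> X \<or> q \<in> Y" using U by auto
  then show False
  proof
    assume "q \<in> X"
    then show False using q class_inside[OF und X(1) A sp] p X(2) by blast
  next
    assume "q \<in> Y"
    then show False using q class_inside[OF und Y(1) A sp] p Y(2) by blast
  qed
qed

theorem lemma3p8:
  fixes V :: "'a set" and E :: "('a \<times> 'a) set"
  assumes "undirected V E"
    and "infinite V \<or> card V > 2"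
    and "decomposable V E"
    and "\<exists>A. implication_class E A \<and> spanned A = V"
  shows "\<exists>X. strong_partitive V E X \<and> (\<exists>a b. a \<in> X \<and> b \<in> X \<and> a \<noteq> b) \<and> X \<noteq> V \<and>
           (\<forall>Y. strong_partitive V E Y \<and> Y \<noteq> V \<and> X \<subseteq> Y \<longrightarrow> Y = X)"
proof -
  note und = assms(1)
  obtain A where A: "implication_class E A" and sp: "spanned A = V" using assms(4) by auto
  obtain M where M: "partitive V E M" "\<not> trivial_set V M"
    using assms(3) unfolding decomposable_def indecomposable_def by auto
  have Mne: "M \<noteq> {}" "M \<noteq> V" "\<And>x. M \<noteq> {x}" using M(2) unfolding trivial_set_def by auto
  obtain p where p: "p \<in> M" using Mne by auto
  obtain a b where ab: "a \<in> M" "b \<in> M" "a \<noteq> b"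
    using Mne(1) Mne(3) by (metis all_not_in_conv insertI1 subsetI subset_singletonD)
  define F where "F = {W. partitive V E W \<and> W \<noteq> V \<and> M \<subseteq> W}"
  define S where "S = \<Union>F"
  have MF: "M \<in> F" using M Mne unfolding F_def by auto
  have MS: "M \<subseteq> S" using MF unfolding S_def by auto
  have SP: "partitive V E S" unfolding S_def
    by (rule union_partitive[where p = p]) (use p in \<open>auto simp: F_def\<close>)
  have SV0: "S \<subseteq> V" using SP unfolding partitive_def by auto
  have SV: "S \<noteq> V"
  proof
    assume SV: "S = V"
    obtain e where e: "e \<in> E" and Adef: "A = {e' \<in> E. (e, e') \<in> (Gamma E)\<^sup>*}"
      using A unfolding implication_class_def by auto
    have eA: "e \<in> A" using e Adef by auto
    obtain c d where cd: "e = (c, d)" by (cases e)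
    have EV: "E \<subseteq> V \<times> V" using und unfolding undirected_def graph_def by auto
    have "c \<in> S" "d \<in> S" using e cd EV SV by auto
    then obtain W1 W2 where W: "W1 \<in> F" "c \<in> W1" "W2 \<in> F" "d \<in> W2" unfolding S_def by auto
    have W1: "partitive V E W1" "W1 \<noteq> V" "p \<in> W1" using W p unfolding F_def by auto
    have W2: "partitive V E W2" "W2 \<noteq> V" "p \<in> W2" using W p unfolding F_def by auto
    have U: "partitive V E (W1 \<union> W2)" using union2_partitive[OF W1(1) W2(1) W1(3) W2(3)] .
    have "W1 \<union> W2 = V" using class_inside[OF und U A sp, of c d] eA cd W by auto
    moreover have "W1 \<union> W2 \<noteq> V" using union_not_V[OF und A sp W1(1,2) W2(1,2) W1(3) W2(3)] .
    ultimately show False by simp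
  qed
  have SF: "\<And>W. W \<in> F \<Longrightarrow> W \<subseteq> S" unfolding S_def by auto
  have strong: "strong_partitive V E S"
    unfolding strong_partitive_def
  proof (intro conjI allI impI)
    show "partitive V E S" by (rule SP)
  next
    fix Y assume Y: "partitive V E Y \<and> S \<inter> Y \<noteq> {}"
    show "S \<subseteq> Y \<or> Y \<subseteq> S"
    proof (cases "Y = V")
      case True then show ?thesis using SV0 by auto
    next
      case False
      obtain q where q: "q \<in> S" "q \<in> Y" using Y by auto
      have "partitive V E (S \<union> Y)" using union2_partitive[OF SP _ q] Y by auto
      moreover have "S \<union> Y \<noteq> V" using union_not_V[OF und A sp SP SV _ False q] Y by auto
      ultimately have "S \<union> Y \<in> F" using MS unfolding F_def by auto
      then show ?thesis using SF by auto
    qed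
  qed
  have maxi: "\<forall>Y. strong_partitive V E Y \<and> Y \<noteq> V \<and> S \<subseteq> Y \<longrightarrow> Y = S"
  proof (intro allI impI)
    fix Y assume Y: "strong_partitive V E Y \<and> Y \<noteq> V \<and> S \<subseteq> Y"
    then have "Y \<in> F" using MS unfolding F_def strong_partitive_def by auto
    then show "Y = S" using SF Y by auto
  qed
  show ?thesis using strong ab MS SV maxi by blast
qed

end
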